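(* Let $K\ge2$, $\mathcal{M}=\mathcal{L}^K$, and for each $j$ let $\mathcal{A}_j=\{\nu\in\mathcal{M}:c_\pi(\nu_j)<c_\pi(\nu_i)\ \forall i\ne j\}$ and $\mathcal{A}_j^c=\mathcal{M}\setminus\mathcal{A}_j$. Let $\mu\in\mathcal{A}_1$ and $t\in\Sigma_K$. Then \[\inf_{\nu\in\mathcal{A}_1^c}\sum_{a=1}^K t_a\mathrm{KL}(\mu_a,\nu_a)=\min_{j\ne1}\ \inf_{x\le y}\big\{t_1\mathrm{KL}^U_{\inf}(\mu_1,y)+t_j\mathrm{KL}^L_{\inf}(\mu_j,x)\big\},\] and hence $V(\mu):=\sup_{t\in\Sigma_K}\inf_{\nu\in\mathcal{A}_1^c}\sum_a t_a\mathrm{KL}(\mu_a,\nu_a)=\sup_{t\in\Sigma_K}\min_{j\ne1}\inf_{x\le y}\{t_1\mathrm{KL}^U_{\inf}(\mu_1,y)+t_j\mathrm{KL}^L_{\inf}(\mu_j,x)\}$.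
   Context: $\pi\in(0,1)$, $\epsilon>0$, $B>0$. $\mathcal{L}=\{\eta\in\mathcal{P}(\mathbb{R}):\mathbb{E}_\eta|X|^{1+\epsilon}\le B\}$. $F_\eta(x)=\eta((-\infty,x])$, $x_\pi(\eta)=\min\{z:F_\eta(z)\ge\pi\}$, $c_\pi(\eta)=\frac{F_\eta(x_\pi(\eta))-\pi}{1-\pi}x_\pi(\eta)+\frac{1}{1-\pi}\int_{(x_\pi(\eta),\infty)}y\,dF_\eta(y)$. $\Sigma_K$ is the probability simplex in $\mathbb{R}^K$. $\mathrm{KL}(\eta,\kappa)=\int\log\frac{d\eta}{d\kappa}d\eta$ if $\eta\ll\kappa$, else $+\infty$. $\mathrm{KL}^U_{\inf}(\eta,x)=\inf\{\mathrm{KL}(\eta,\kappa):\kappa\in\mathcal{L},c_\pi(\kappa)\ge x\}$, $\mathrm{KL}^L_{\inf}(\eta,x)=\inf\{\mathrm{KL}(\eta,\kappa):\kappa\in\mathcal{L},c_\pi(\kappa)\le x\}$. *)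

theory Defs
  imports "HOL-Probability.Probability"
begin

definition prob_real :: "real measure \<Rightarrow> bool" where
  "prob_real \<eta> \<longleftrightarrow> prob_space \<eta> \<and> sets \<eta> = sets borel"

definition Lclass :: "real \<Rightarrow> real \<Rightarrow> real measure set" where
  "Lclass eps B = {\<eta>. prob_real \<eta> \<and>
      (\<integral>\<^sup>+ x. ennreal (\<bar>x\<bar> powr (1 + eps)) \<partial>\<eta>) \<le> ennreal B}"

definition cdf_of :: "real measure \<Rightarrow> real \<Rightarrow> real" where
  "cdf_of \<eta> x = measure \<eta> {..x}"

definition quant :: "real \<Rightarrow> real measure \<Rightarrow> real" where
  "quant p \<eta> = Inf {z. cdf_of \<eta> z \<ge> p}"

definition cvar :: "real \<Rightarrow> real measure \<Rightarrow> real" where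
  "cvar p \<eta> = (cdf_of \<eta> (quant p \<eta>) - p) / (1 - p) * quant p \<eta>
      + 1 / (1 - p) * (LINT y:{quant p \<eta><..}|\<eta>. y)"

definition KL :: "real measure \<Rightarrow> real measure \<Rightarrow> ereal" where
  "KL \<eta> \<kappa> = (if absolutely_continuous \<kappa> \<eta> then
      enn2ereal (\<integral>\<^sup>+ x. ennreal (max 0 (ln (enn2real (RN_deriv \<kappa> \<eta> x)))) \<partial>\<eta>)
      - enn2ereal (\<integral>\<^sup>+ x. ennreal (max 0 (- ln (enn2real (RN_deriv \<kappa> \<eta> x)))) \<partial>\<eta>)
    else \<infinity>)"

definition KLinfU :: "real \<Rightarrow> real \<Rightarrow> real \<Rightarrow> real measure \<Rightarrow> real \<Rightarrow> ereal" where
  "KLinfU p eps B \<eta> x = (INF \<kappa>\<in>{\<kappa>\<in>Lclass eps B. cvar p \<kappa> \<ge> x}. KL \<eta> \<kappa>)"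

definition KLinfL :: "real \<Rightarrow> real \<Rightarrow> real \<Rightarrow> real measure \<Rightarrow> real \<Rightarrow> ereal" where
  "KLinfL p eps B \<eta> x = (INF \<kappa>\<in>{\<kappa>\<in>Lclass eps B. cvar p \<kappa> \<le> x}. KL \<eta> \<kappa>)"

definition models :: "real \<Rightarrow> real \<Rightarrow> nat \<Rightarrow> (nat \<Rightarrow> real measure) set" where
  "models eps B K = {\<nu>. \<forall>i\<in>{1..K}. \<nu> i \<in> Lclass eps B}"

definition Aset :: "real \<Rightarrow> real \<Rightarrow> real \<Rightarrow> nat \<Rightarrow> nat \<Rightarrow> (nat \<Rightarrow> real measure) set" where
  "Aset p eps B K j = {\<nu>\<in>models eps B K.
      \<forall>i\<in>{1..K}. i \<noteq> j \<longrightarrow> cvar p (\<nu> j) < cvar p (\<nu> i)}"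

definition prob_simplex :: "nat \<Rightarrow> (nat \<Rightarrow> real) set" where
  "prob_simplex K = {t. (\<forall>a\<in>{1..K}. t a \<ge> 0) \<and> (\<Sum>a=1..K. t a) = 1}"

end

theory Submission
  imports Defs
begin

lemma ereal_mult_INF_nonneg:
  fixes g :: "'x \<Rightarrow> ereal"
  assumes "0 \<le> b" "T \<noteq> {}"
  shows "ereal b * (INF u\<in>T. g u) = (INF u\<in>T. ereal b * g u)"
proof (cases "b = 0")
  case True then show ?thesis using assms by (simp add: zero_ereal_def[symmetric])
next
  case False
  have c: "isCont (\<lambda>x. ereal b * x) z" for z
    unfolding isCont_def by (intro tendsto_cmult_ereal tendsto_ident_at) auto
  have "(\<lambda>x. ereal b * x) (Inf (g ` T)) = Inf ((\<lambda>x. ereal b * x) ` (g ` T))"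
    by (rule continuous_at_Inf_mono)
       (use assms in \<open>auto simp: mono_def ereal_mult_left_mono continuous_at_imp_continuous_at_within c\<close>)
  then show ?thesis by (simp add: image_comp comp_def)
qed

lemma inf_comb:
  fixes c :: ereal and a b :: real and f g :: "'x \<Rightarrow> ereal"
  assumes a: "0 \<le> a" and b: "0 \<le> b"
    and fnn: "\<And>s. s \<in> S \<Longrightarrow> 0 \<le> f s" and gnn: "\<And>u. u \<in> T \<Longrightarrow> 0 \<le> g u"
    and H1: "\<And>s u. s \<in> S \<Longrightarrow> u \<in> T \<Longrightarrow> c \<le> ereal a * f s + ereal b * g u"
    and H2: "\<And>u. a = 0 \<Longrightarrow> u \<in> T \<Longrightarrow> c \<le> ereal b * g u"
    and H3: "\<And>s. b = 0 \<Longrightarrow> s \<in> S \<Longrightarrow> c \<le> ereal a * f s"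
    and H4: "a = 0 \<Longrightarrow> b = 0 \<Longrightarrow> c \<le> 0"
  shows "c \<le> ereal a * (INF s\<in>S. f s) + ereal b * (INF u\<in>T. g u)"
proof -
  have If: "0 \<le> (INF s\<in>S. f s)" using fnn by (auto intro: INF_greatest)
  have Ig: "0 \<le> (INF u\<in>T. g u)" using gnn by (auto intro: INF_greatest)
  have af: "0 \<le> ereal a * (INF s\<in>S. f s)" using a If by simp
  have bg: "0 \<le> ereal b * (INF u\<in>T. g u)" using b Ig by simp
  show ?thesis
  proof (cases "S = {}")
    case S: True
    show ?thesis
    proof (cases "a = 0")
      case False
      then have "ereal a * (INF s\<in>S. f s) = \<infinity>" using S a by (simp add: top_ereal_def)
      note X = this show ?thesis by (subst X) simp
    next
      case a0: True
      show ?thesis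
      proof (cases "T = {}")
        case T: True
        show ?thesis
        proof (cases "b = 0")
          case True then show ?thesis using a0 H4 by (simp add: zero_ereal_def[symmetric])
        next
          case False
          then have "ereal b * (INF u\<in>T. g u) = \<infinity>" using T b by (simp add: top_ereal_def)
          note X = this show ?thesis by (subst X) simp
        qed
      next
        case T: False
        have "c \<le> (INF u\<in>T. ereal b * g u)" using H2 a0 by (auto intro: INF_greatest)
        also have "\<dots> = ereal b * (INF u\<in>T. g u)" using ereal_mult_INF_nonneg[OF b T] by simp
        finally show ?thesis using a0 by (simp add: zero_ereal_def[symmetric])
      qed
    qed
  next
    case S: False
    show ?thesis
    proof (cases "T = {}")
      case T: True
      show ?thesis
      proof (cases "b = 0")
        case False
        then have "ereal b * (INF u\<in>T. g u) = \<infinity>" using T b by (simp add: top_ereal_def)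
        note X = this show ?thesis by (subst X) simp
      next
        case b0: True
        have "c \<le> (INF s\<in>S. ereal a * f s)" using H3 b0 by (auto intro: INF_greatest)
        also have "\<dots> = ereal a * (INF s\<in>S. f s)" using ereal_mult_INF_nonneg[OF a S] by simp
        finally show ?thesis using b0 by (simp add: zero_ereal_def[symmetric])
      qed
    next
      case T: False
      have "c \<le> (INF s\<in>S. INF u\<in>T. ereal a * f s + ereal b * g u)"
        using H1 by (auto intro!: INF_greatest)
      also have "\<dots> = (INF s\<in>S. ereal a * f s + (INF u\<in>T. ereal b * g u))"
        using T a b fnn gnn by (intro INF_cong refl INF_ereal_add_right) auto
      also have "\<dots> = (INF s\<in>S. ereal a * f s) + (INF u\<in>T. ereal b * g u)"
      proof (rule INF_ereal_add_left[OF S])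
        show "(INF u\<in>T. ereal b * g u) \<noteq> - \<infinity>"
          using ereal_mult_INF_nonneg[OF b T, of g] bg by auto
      qed (use a fnn in auto)
      also have "\<dots> = ereal a * (INF s\<in>S. f s) + ereal b * (INF u\<in>T. g u)"
        using ereal_mult_INF_nonneg[OF a S, of f] ereal_mult_INF_nonneg[OF b T, of g] by simp
      finally show ?thesis .
    qed
  qed
qed

lemma KL_nonneg:
  assumes "prob_real \<eta>" "prob_real \<kappa>"
  shows "0 \<le> KL \<eta> \<kappa>"
proof (cases "absolutely_continuous \<kappa> \<eta>")
  case False
  then show ?thesis by (simp add: KL_def)
next
  case ac: True
  interpret K: prob_space \<kappa> using assms(2) by (simp add: prob_real_def)
  interpret E: prob_space \<eta> using assms(1) by (simp add: prob_real_def)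
  have sets: "sets \<eta> = sets \<kappa>" using assms by (simp add: prob_real_def)
  define D where "D x = enn2real (RN_deriv \<kappa> \<eta> x)" for x
  have Dm[measurable]: "D \<in> borel_measurable \<kappa>" unfolding D_def by measurable
  have Dnn: "0 \<le> D x" for x by (simp add: D_def)
  have dens: "density \<kappa> (\<lambda>x. ennreal (D x)) = \<eta>"
  proof -
    have "density \<kappa> (RN_deriv \<kappa> \<eta>) = density \<kappa> (\<lambda>x. ennreal (D x))"
    proof (rule density_cong)
      from K.RN_deriv_finite[OF E.sigma_finite_measure_axioms ac sets]
      show "AE x in \<kappa>. RN_deriv \<kappa> \<eta> x = ennreal (D x)"
        unfolding D_def by eventually_elim (auto simp: less_top)
    qed auto
    then show ?thesis using K.density_RN_deriv[OF ac sets] by simp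
  qed
  have Dm'[measurable]: "D \<in> borel_measurable \<eta>" using Dm sets by (simp cong: measurable_cong_sets)
  define P where "P = (\<integral>\<^sup>+ x. ennreal (max 0 (ln (D x))) \<partial>\<eta>)"
  define N where "N = (\<integral>\<^sup>+ x. ennreal (max 0 (- ln (D x))) \<partial>\<eta>)"
  have KLeq: "KL \<eta> \<kappa> = enn2ereal P - enn2ereal N"
    using ac by (simp add: KL_def P_def N_def D_def)
  have pw: "D x * max 0 (- ln (D x)) \<le> 1" for x
  proof (cases "D x = 0")
    case True then show ?thesis by simp
  next
    case False
    then have pos: "0 < D x" using Dnn[of x] by simp
    have "- ln (D x) = ln (1 / D x)" using pos by (simp add: ln_div)
    also have "\<dots> \<le> 1 / D x - 1" using pos by (intro ln_le_minus_one) simp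
    finally have "D x * (- ln (D x)) \<le> D x * (1 / D x - 1)" using pos by (intro mult_left_mono) auto
    also have "\<dots> = 1 - D x" using pos by (simp add: field_simps)
    finally show ?thesis using pos by (auto simp: max_def)
  qed
  have "N = (\<integral>\<^sup>+ x. ennreal (D x) * ennreal (max 0 (- ln (D x))) \<partial>\<kappa>)"
    unfolding N_def by (subst dens[symmetric], subst nn_integral_density) auto
  also have "\<dots> \<le> (\<integral>\<^sup>+ x. 1 \<partial>\<kappa>)"
    by (intro nn_integral_mono) (metis Dnn ennreal_le_1 ennreal_mult' max.cobounded1 pw)
  also have "\<dots> = 1" by (simp add: K.emeasure_space_1)
  finally have Nfin: "N \<noteq> \<infinity>" by (auto simp: top_unique)
  show ?thesis
  proof (cases "P = \<infinity>")
    case True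
    then show ?thesis using KLeq by simp
  next
    case Pfin: False
    have P2: "P = (\<integral>\<^sup>+ x. ennreal (ln (D x)) \<partial>\<eta>)" unfolding P_def by (simp only: ennreal_max_0)
    have N2: "N = (\<integral>\<^sup>+ x. ennreal (- ln (D x)) \<partial>\<eta>)" unfolding N_def by (simp only: ennreal_max_0)
    have int: "integrable \<eta> (\<lambda>x. ln (D x))"
      unfolding real_integrable_def using Pfin Nfin P2 N2 by simp
    have "integral\<^sup>L \<eta> (\<lambda>x. ln (D x)) = enn2real P - enn2real N"
      unfolding real_lebesgue_integral_def[OF int] P2 N2 ..
    note ii = this
    have KLi: "KL \<eta> \<kappa> = ereal (integral\<^sup>L \<eta> (\<lambda>x. ln (D x)))"
    proof -
      have eP: "enn2ereal P = ereal (enn2real P)" using Pfin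
        by (cases P rule: ennreal_cases) auto
      have eN: "enn2ereal N = ereal (enn2real N)" using Nfin
        by (cases N rule: ennreal_cases) auto
      show ?thesis using KLeq eP eN ii by simp
    qed
    interpret IS: information_space \<kappa> "exp 1" by unfold_locales simp
    have int2: "integrable \<kappa> (\<lambda>x. D x * log (exp 1) (D x))"
      using int unfolding dens[symmetric] by (subst (asm) integrable_real_density) (auto simp: log_def Dnn)
    have "0 \<le> KL_divergence (exp 1) \<kappa> (density \<kappa> D)"
      by (rule IS.KL_nonneg) (use dens E.prob_space_axioms int2 Dnn in auto)
    also have "KL_divergence (exp 1) \<kappa> (density \<kappa> D) = integral\<^sup>L \<eta> (\<lambda>x. ln (D x))"
      unfolding dens KL_divergence_def entropy_density_def by (simp add: D_def log_def comp_def)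
    finally show ?thesis using KLi by simp
  qed
qed

lemma KL_self:
  assumes "prob_real \<eta>"
  shows "KL \<eta> \<eta> = 0"
proof -
  interpret E: prob_space \<eta> using assms by (simp add: prob_real_def)
  have "AE x in \<eta>. 1 = RN_deriv \<eta> \<eta> x"
    by (rule E.RN_deriv_unique) (auto simp: density_1)
  then have "AE x in \<eta>. enn2real (RN_deriv \<eta> \<eta> x) = 1" by eventually_elim (metis enn2real_1)
  then have a: "(\<integral>\<^sup>+ x. ennreal (max 0 (ln (enn2real (RN_deriv \<eta> \<eta> x)))) \<partial>\<eta>) = 0"
    and b: "(\<integral>\<^sup>+ x. ennreal (max 0 (- ln (enn2real (RN_deriv \<eta> \<eta> x)))) \<partial>\<eta>) = 0"
    by (auto intro!: nn_integral_0_iff_AE[THEN iffD2] elim!: AE_mp)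
  show ?thesis unfolding KL_def using a b by (simp add: absolutely_continuous_def)
qed


lemma Lprob: "\<kappa> \<in> Lclass eps B \<Longrightarrow> prob_real \<kappa>"
  by (simp add: Lclass_def)

lemma main_eq:
  fixes p eps B :: real and K :: nat and \<mu> :: "nat \<Rightarrow> real measure" and t :: "nat \<Rightarrow> real"
  assumes "2 \<le> K" and mu: "\<mu> \<in> Aset p eps B K 1" and t: "t \<in> prob_simplex K"
  shows "(INF \<nu>\<in>models eps B K - Aset p eps B K 1. \<Sum>a=1..K. ereal (t a) * KL (\<mu> a) (\<nu> a))
          = (INF j\<in>{2..K}. INF xy\<in>{(x::real, y::real). x \<le> y}.
               ereal (t 1) * KLinfU p eps B (\<mu> 1) (snd xy) + ereal (t j) * KLinfL p eps B (\<mu> j) (fst xy))"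
    (is "?L = ?R")
proof -
  let ?F = "\<lambda>\<nu>. \<Sum>a=1..K. ereal (t a) * KL (\<mu> a) (\<nu> a)"
  have muL: "\<mu> a \<in> Lclass eps B" if "a \<in> {1..K}" for a
    using mu that by (simp add: Aset_def models_def)
  have tnn: "0 \<le> t a" if "a \<in> {1..K}" for a using t that by (simp add: prob_simplex_def)
  show ?thesis
  proof (rule antisym)
    show "?R \<le> ?L"
    proof (rule INF_greatest)
      fix \<nu> assume nu: "\<nu> \<in> models eps B K - Aset p eps B K 1"
      then have nuL: "\<nu> a \<in> Lclass eps B" if "a \<in> {1..K}" for a
        using that by (simp add: models_def)
      from nu obtain i where i: "i \<in> {1..K}" "i \<noteq> 1" "\<not> cvar p (\<nu> 1) < cvar p (\<nu> i)"
        by (auto simp: Aset_def)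
      have i2: "i \<in> {2..K}" using i by auto
      have one: "1 \<in> {1..K}" using assms by auto
      have "?R \<le> ereal (t 1) * KLinfU p eps B (\<mu> 1) (cvar p (\<nu> 1))
                 + ereal (t i) * KLinfL p eps B (\<mu> i) (cvar p (\<nu> i))"
        by (rule INF_lower2[OF i2], rule INF_lower2[of "(cvar p (\<nu> i), cvar p (\<nu> 1))"])
           (use i in auto)
      also have "\<dots> \<le> ereal (t 1) * KL (\<mu> 1) (\<nu> 1) + ereal (t i) * KL (\<mu> i) (\<nu> i)"
        unfolding KLinfU_def KLinfL_def
        by (intro add_mono ereal_mult_left_mono INF_lower) (use nuL one i tnn in auto)
      also have "\<dots> = (\<Sum>a\<in>{1,i}. ereal (t a) * KL (\<mu> a) (\<nu> a))" using i by simp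
      also have "\<dots> \<le> ?F \<nu>"
      proof (rule sum_mono2)
        fix b assume "b \<in> {1..K} - {1, i}"
        then have b: "b \<in> {1..K}" by simp
        have "0 \<le> KL (\<mu> b) (\<nu> b)" using KL_nonneg[OF Lprob[OF muL[OF b]] Lprob[OF nuL[OF b]]] .
        then show "0 \<le> ereal (t b) * KL (\<mu> b) (\<nu> b)"
          using tnn[OF b] by simp
      qed (use i one in auto)
      finally show "?R \<le> ?F \<nu>" .
    qed
  next
    show "?L \<le> ?R"
    proof (intro INF_greatest)
      fix j xy assume j: "j \<in> {2..K}" and xyin: "xy \<in> {(x::real, y::real). x \<le> y}"
      obtain x y where xyeq: "xy = (x, y)" by (cases xy)
      have xy: "x \<le> y" using xyin xyeq by simp
      have j1: "j \<in> {1..K}" "j \<noteq> 1" using j by auto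
      have one: "1 \<in> {1..K}" using assms by auto
      have star: "?L \<le> ereal (t 1) * KL (\<mu> 1) k1 + ereal (t j) * KL (\<mu> j) kj"
        if k: "k1 \<in> Lclass eps B" "kj \<in> Lclass eps B" "cvar p kj \<le> cvar p k1" for k1 kj
      proof -
        define \<nu> where "\<nu> = \<mu>(1 := k1, j := kj)"
        have nuM: "\<nu> \<in> models eps B K - Aset p eps B K 1"
          using k j1 muL by (auto simp: \<nu>_def models_def Aset_def)
        have "?L \<le> ?F \<nu>" by (rule INF_lower[OF nuM])
        also have "?F \<nu> = (\<Sum>a\<in>{1..K} - {1, j}. ereal (t a) * KL (\<mu> a) (\<nu> a))
                        + (\<Sum>a\<in>{1, j}. ereal (t a) * KL (\<mu> a) (\<nu> a))"
          by (rule sum.subset_diff) (use j1 one in auto)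
        also have "(\<Sum>a\<in>{1..K} - {1, j}. ereal (t a) * KL (\<mu> a) (\<nu> a)) = 0"
          by (rule sum.neutral) (auto simp: \<nu>_def KL_self[OF Lprob[OF muL]])
        also have "(\<Sum>a\<in>{1, j}. ereal (t a) * KL (\<mu> a) (\<nu> a))
                   = ereal (t 1) * KL (\<mu> 1) k1 + ereal (t j) * KL (\<mu> j) kj"
          using j1 by (simp add: \<nu>_def)
        finally show ?thesis by simp
      qed
      show "?L \<le> ereal (t 1) * KLinfU p eps B (\<mu> 1) (snd xy) + ereal (t j) * KLinfL p eps B (\<mu> j) (fst xy)"
        unfolding xyeq fst_conv snd_conv KLinfU_def KLinfL_def
      proof (rule inf_comb)
        show "0 \<le> t 1" "0 \<le> t j" using tnn one j1 by auto
      next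
        fix s assume "s \<in> {\<kappa> \<in> Lclass eps B. y \<le> cvar p \<kappa>}"
        then show "0 \<le> KL (\<mu> 1) s" using KL_nonneg[OF Lprob[OF muL[OF one]], of s] Lprob by auto
      next
        fix u assume "u \<in> {\<kappa> \<in> Lclass eps B. cvar p \<kappa> \<le> x}"
        then show "0 \<le> KL (\<mu> j) u" using KL_nonneg[OF Lprob[OF muL[OF j1(1)]], of u] Lprob by auto
      next
        fix s u assume "s \<in> {\<kappa> \<in> Lclass eps B. y \<le> cvar p \<kappa>}" "u \<in> {\<kappa> \<in> Lclass eps B. cvar p \<kappa> \<le> x}"
        then show "?L \<le> ereal (t 1) * KL (\<mu> 1) s + ereal (t j) * KL (\<mu> j) u"
          using xy by (intro star) auto
      next
        fix u assume "t 1 = 0" "u \<in> {\<kappa> \<in> Lclass eps B. cvar p \<kappa> \<le> x}"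
        then show "?L \<le> ereal (t j) * KL (\<mu> j) u"
          using star[of u u] by (simp add: zero_ereal_def[symmetric])
      next
        fix s assume "t j = 0" "s \<in> {\<kappa> \<in> Lclass eps B. y \<le> cvar p \<kappa>}"
        then show "?L \<le> ereal (t 1) * KL (\<mu> 1) s"
          using star[of s s] by (simp add: zero_ereal_def[symmetric])
      next
        assume "t 1 = 0" "t j = 0"
        then show "?L \<le> 0"
          using star[of "\<mu> j" "\<mu> j"] muL j1 by (simp add: zero_ereal_def[symmetric])
      qed
    qed
  qed
qed

theorem lemma2:
  fixes p eps B :: real and K :: nat and \<mu> :: "nat \<Rightarrow> real measure"
  assumes "0 < p" "p < 1" "0 < eps" "0 < B" "2 \<le> K"
    and "\<mu> \<in> Aset p eps B K 1"
  shows "(\<forall>t\<in>prob_simplex K.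
            (INF \<nu>\<in>models eps B K - Aset p eps B K 1. \<Sum>a=1..K. ereal (t a) * KL (\<mu> a) (\<nu> a))
          = (INF j\<in>{2..K}. INF xy\<in>{(x::real, y::real). x \<le> y}.
               ereal (t 1) * KLinfU p eps B (\<mu> 1) (snd xy) + ereal (t j) * KLinfL p eps B (\<mu> j) (fst xy)))
       \<and> (SUP t\<in>prob_simplex K.
            INF \<nu>\<in>models eps B K - Aset p eps B K 1. \<Sum>a=1..K. ereal (t a) * KL (\<mu> a) (\<nu> a))
          = (SUP t\<in>prob_simplex K. INF j\<in>{2..K}. INF xy\<in>{(x::real, y::real). x \<le> y}.
               ereal (t 1) * KLinfU p eps B (\<mu> 1) (snd xy) + ereal (t j) * KLinfL p eps B (\<mu> j) (fst xy))"
  using main_eq[OF assms(5,6)] by (auto intro!: SUP_cong)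

end
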